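(* Let $s_1,s_2\in\mathcal S$ and let $s,s'\in\mathcal S$ both lie in the plane $\mathrm{Span}\{s_1,s_2\}$. Let $\vec\beta\in T_s\mathcal S$ and $\vec\beta'\in T_{s'}\mathcal S$ (each of $\eta$-norm $<1$) be the unique vectors with $B(s,\vec\beta)s_1=s_2$ and $B(s',\vec\beta')s_1=s_2$. Then $$B(s,\vec\beta)=B(s',\vec\beta')=\mathrm{id}_V+\frac{s_1\otimes s_1+s_2\otimes s_2+s_1\wedge s_2-2\gamma_{12}\,s_2\otimes s_1}{1+\gamma_{12}},$$ where $\gamma_{12}=-\eta(s_1,s_2)$. In particular all boosts linking $s_1$ to $s_2$ whose reference state lies in $\mathrm{Span}\{s_1,s_2\}$ coincide.
   Context: $V$ is a 4-dimensional real vector space with a symmetric non-degenerate bilinear form $\eta$ of signature $(-,+,+,+)$. $\mathcal S$ is one fixed connected component of $\{v\in V:\eta(v,v)=-1\}$. For $s\in\mathcal S$, $T_s\mathcal S:=\{u\in V:\eta(u,s)=0\}$. Endomorphisms are written via $(u\otimes v)(w):=\eta(v,w)u$ and $u\wedge v:=u\otimes v-v\otimes u$. For $s\in\mathcal S$ and $\vec\beta\in T_s\mathcal S$ with $\beta^2:=\eta(\vec\beta,\vec\beta)<1$, $\beta>0$, $\vec n=\vec\beta/\beta$, $\gamma=(1-\beta^2)^{-1/2}$, the boost relative to $s$ is $B(s,\vec\beta)=\mathrm{id}_V+(\gamma-1)(-s\otimes s+\vec n\otimes\vec n)+\beta\gamma(s\otimes\vec n-\vec n\otimes s)$, and $B(s,0)=\mathrm{id}_V$.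 For any $s,s_1,s_2\in\mathcal S$ there is a unique such $\vec\beta\in T_s\mathcal S$ with $B(s,\vec\beta)s_1=s_2$. *)

theory Defs
  imports "HOL-Analysis.Analysis"
begin

definition tens :: "('a::real_vector \<Rightarrow> 'a \<Rightarrow> real) \<Rightarrow> 'a \<Rightarrow> 'a \<Rightarrow> ('a \<Rightarrow> 'a)" where
  "tens eta u v = (\<lambda>w. eta v w *\<^sub>R u)"

definition wedge :: "('a::real_vector \<Rightarrow> 'a \<Rightarrow> real) \<Rightarrow> 'a \<Rightarrow> 'a \<Rightarrow> ('a \<Rightarrow> 'a)" where
  "wedge eta u v = (\<lambda>w. tens eta u v w - tens eta v u w)"

definition lorentz_form :: "('a::euclidean_space \<Rightarrow> 'a \<Rightarrow> real) \<Rightarrow> bool" where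
  "lorentz_form eta \<longleftrightarrow> DIM('a) = 4 \<and> bilinear eta \<and> (\<forall>u v. eta u v = eta v u)
     \<and> (\<forall>u. (\<forall>v. eta u v = 0) \<longrightarrow> u = 0)
     \<and> (\<exists>e :: nat \<Rightarrow> 'a. \<forall>i<4. \<forall>j<4.
          eta (e i) (e j) = (if i = j then (if i = 0 then -1 else 1) else 0))"

definition hyperboloid :: "('a::real_vector \<Rightarrow> 'a \<Rightarrow> real) \<Rightarrow> 'a set" where
  "hyperboloid eta = {v. eta v v = -1}"

definition tangent :: "('a::real_vector \<Rightarrow> 'a \<Rightarrow> real) \<Rightarrow> 'a \<Rightarrow> 'a set" where
  "tangent eta s = {u. eta u s = 0}"

definition boost :: "('a::real_vector \<Rightarrow> 'a \<Rightarrow> real) \<Rightarrow> 'a \<Rightarrow> 'a \<Rightarrow> ('a \<Rightarrow> 'a)" where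
  "boost eta s b =
    (if b = 0 then id else
     (let \<beta> = sqrt (eta b b); n = (1 / \<beta>) *\<^sub>R b; \<gamma> = 1 / sqrt (1 - \<beta>\<^sup>2) in
      (\<lambda>w. w + (\<gamma> - 1) *\<^sub>R (- tens eta s s w + tens eta n n w)
             + (\<beta> * \<gamma>) *\<^sub>R (tens eta s n w - tens eta n s w))))"

end

theory Submission
  imports Defs "HOL-Analysis.Analysis"
begin



lemma lf_bil: "lorentz_form (eta::'a::euclidean_space\<Rightarrow>_)  \<Longrightarrow> bilinear eta"
  and lf_sym: "lorentz_form eta \<Longrightarrow> eta u v = eta v u"
  and lf_nd: "lorentz_form eta \<Longrightarrow> (\<And>v. eta u v = 0) \<Longrightarrow> u = 0"
  and lf_dim: "lorentz_form eta \<Longrightarrow> DIM('a::euclidean_space) = 4"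
  unfolding lorentz_form_def by auto

lemma coords:
  fixes eta :: "'a::euclidean_space \<Rightarrow> 'a \<Rightarrow> real"
  assumes L: "lorentz_form eta"
  shows "\<exists>a0 a1 a2 a3. \<forall>v w. eta v w = - eta a0 v * eta a0 w + eta a1 v * eta a1 w
          + eta a2 v * eta a2 w + eta a3 v * eta a3 w"
proof -
  have B: "bilinear eta" using lf_bil[OF L] .
  obtain e :: "nat \<Rightarrow> 'a" where e: "\<forall>i<4. \<forall>j<4.
          eta (e i) (e j) = (if i = j then (if i = 0 then -1 else 1) else 0)"
    using L unfolding lorentz_form_def by blast
  define a0 where "a0 = e 0"
  define a1 where "a1 = e 1"
  define a2 where "a2 = e 2"
  define a3 where "a3 = e 3"
  have e00: "eta a0 a0 = -1" and e11: "eta a1 a1 = 1" and e22: "eta a2 a2 = 1"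
    and e33: "eta a3 a3 = 1"
    and e01: "eta a0 a1 = 0" and e02: "eta a0 a2 = 0" and e03: "eta a0 a3 = 0"
    and e10: "eta a1 a0 = 0" and e12: "eta a1 a2 = 0" and e13: "eta a1 a3 = 0"
    and e20: "eta a2 a0 = 0" and e21: "eta a2 a1 = 0" and e23: "eta a2 a3 = 0"
    and e30: "eta a3 a0 = 0" and e31: "eta a3 a1 = 0" and e32: "eta a3 a2 = 0"
    using e unfolding a0_def a1_def a2_def a3_def by auto
  note ee = e00 e11 e22 e33 e01 e02 e03 e10 e12 e13 e20 e21 e23 e30 e31 e32
  have d: "a0 \<noteq> a1" "a0 \<noteq> a2" "a0 \<noteq> a3" "a1 \<noteq> a2" "a1 \<noteq> a3" "a2 \<noteq> a3"
    using ee by (metis zero_neq_one zero_neq_neg_one)+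
  define E where "E = {a0, a1, a2, a3}"
  have finE: "finite E" and cE: "card E = 4" unfolding E_def using d by auto
  have sumE: "(\<Sum>x\<in>E. f x *\<^sub>R x) = f a0 *\<^sub>R a0 + f a1 *\<^sub>R a1 + f a2 *\<^sub>R a2 + f a3 *\<^sub>R a3" for f
    unfolding E_def using d by (simp add: add.assoc)
  have ex: "eta j (c0 *\<^sub>R a0 + c1 *\<^sub>R a1 + c2 *\<^sub>R a2 + c3 *\<^sub>R a3)
     = c0 * eta j a0 + c1 * eta j a1 + c2 * eta j a2 + c3 * eta j a3" for j c0 c1 c2 c3
    by (simp add: bilinear_radd[OF B] bilinear_rmul[OF B])
  have indep: "independent E"
  proof (rule independent_if_scalars_zero[OF finE])
    fix f x assume z: "(\<Sum>x\<in>E. f x *\<^sub>R x) = 0" and x: "x \<in> E"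
    have "eta j (\<Sum>x\<in>E. f x *\<^sub>R x) = 0" for j using z by (simp add: bilinear_rzero[OF B])
    then have "eta j (f a0 *\<^sub>R a0 + f a1 *\<^sub>R a1 + f a2 *\<^sub>R a2 + f a3 *\<^sub>R a3) = 0" for j
      unfolding sumE .
    from this[of a0] this[of a1] this[of a2] this[of a3]
    have "f a0 = 0" "f a1 = 0" "f a2 = 0" "f a3 = 0" unfolding ex by (simp_all add: ee)
    then show "f x = 0" using x unfolding E_def by auto
  qed
  have sp: "UNIV \<subseteq> span E"
    by (rule card_ge_dim_independent[OF _ indep]) (use lf_dim[OF L] cE in auto)
  have rep: "v = - eta a0 v *\<^sub>R a0 + eta a1 v *\<^sub>R a1 + eta a2 v *\<^sub>R a2 + eta a3 v *\<^sub>R a3" for v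
  proof -
    have "v \<in> span E" using sp by auto
    then obtain u where u: "v = (\<Sum>x\<in>E. u x *\<^sub>R x)" using span_finite[OF finE] by auto
    then have v: "v = u a0 *\<^sub>R a0 + u a1 *\<^sub>R a1 + u a2 *\<^sub>R a2 + u a3 *\<^sub>R a3"
      unfolding sumE .
    have "eta a0 v = - u a0" "eta a1 v = u a1" "eta a2 v = u a2" "eta a3 v = u a3"
      by (subst v, unfold ex, simp add: ee)+
    then show ?thesis using v by simp
  qed
  show ?thesis
  proof (intro exI allI)
    fix v w
    have "eta v w = eta v (- eta a0 w *\<^sub>R a0 + eta a1 w *\<^sub>R a1 + eta a2 w *\<^sub>R a2 + eta a3 w *\<^sub>R a3)"
      using rep[of w] by simp
    also have "\<dots> = - eta a0 w * eta v a0 + eta a1 w * eta v a1 + eta a2 w * eta v a2 + eta a3 w * eta v a3"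
      by (simp add: bilinear_radd[OF B] bilinear_rmul[OF B] bilinear_rneg[OF B] bilinear_rsub[OF B])
    finally show "eta v w = - eta a0 v * eta a0 w + eta a1 v * eta a1 w
          + eta a2 v * eta a2 w + eta a3 v * eta a3 w"
      using lf_sym[OF L] by (simp add: mult.commute)
  qed
qed

lemma cs3: "((y1::real)*x1+y2*x2+y3*x3)^2 \<le> (y1^2+y2^2+y3^2)*(x1^2+x2^2+x3^2)"
proof -
  have "(y1^2+y2^2+y3^2)*(x1^2+x2^2+x3^2) - (y1*x1+y2*x2+y3*x3)^2
    = (y1*x2-y2*x1)^2 + (y1*x3-y3*x1)^2 + (y2*x3-y3*x2)^2" by (simp add: power2_eq_square algebra_simps)
  moreover have "(y1*x2-y2*x1)^2 + (y1*x3-y3*x1)^2 + (y2*x3-y3*x2)^2 \<ge> 0" by simp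
  ultimately show ?thesis by linarith
qed

lemma alg_pos:
  fixes x0 x1 x2 x3 y0 y1 y2 y3 :: real
  assumes h1: "- (x0^2) + x1^2 + x2^2 + x3^2 = -1"
    and h2: "- y0*x0 + y1*x1 + y2*x2 + y3*x3 = 0"
  shows "y0^2 \<le> y1^2+y2^2+y3^2 \<and> (y0^2 = y1^2+y2^2+y3^2 \<longrightarrow> y0 = 0 \<and> y1 = 0 \<and> y2 = 0 \<and> y3 = 0)"
proof -
  define Y where "Y = y1^2+y2^2+y3^2"
  define X where "X = x1^2+x2^2+x3^2"
  have X: "X = x0^2 - 1" using h1 unfolding X_def by linarith
  have Y0: "Y \<ge> 0" unfolding Y_def by simp
  have X0: "X \<ge> 0" unfolding X_def by simp
  have p: "y1*x1+y2*x2+y3*x3 = y0*x0" using h2 by linarith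
  have "(y0*x0)^2 \<le> Y * X" using cs3[of y1 x1 y2 x2 y3 x3] unfolding p X_def Y_def .
  then have c: "y0^2 * x0^2 \<le> Y * x0^2 - Y" unfolding X by (simp add: power_mult_distrib algebra_simps)
  have x0: "x0^2 \<ge> 1" using X X0 by linarith
  have m: "y0^2 * 1 \<le> y0^2 * x0^2" using x0 by (intro mult_left_mono) auto
  have le: "y0^2 \<le> Y"
  proof (rule ccontr)
    assume nl: "\<not> y0^2 \<le> Y"
    then have "Y * x0^2 \<le> y0^2 * x0^2" using x0 by (intro mult_right_mono) auto
    then have "Y \<le> 0" using c by linarith
    then have "Y = 0" using Y0 by linarith
    then show False using c m nl by simp
  qed
  moreover have "y0^2 = Y \<longrightarrow> y0 = 0 \<and> y1 = 0 \<and> y2 = 0 \<and> y3 = 0"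
  proof
    assume e: "y0^2 = Y"
    then have "Y \<le> 0" using c by simp
    then have "Y = 0" using Y0 by simp
    moreover have "y1^2 \<ge> 0" "y2^2 \<ge> 0" "y3^2 \<ge> 0" by simp_all
    ultimately have "y1^2 = 0" "y2^2 = 0" "y3^2 = 0" "y0^2 = 0" using e unfolding Y_def by linarith+
    then show "y0 = 0 \<and> y1 = 0 \<and> y2 = 0 \<and> y3 = 0" by simp
  qed
  ultimately show ?thesis unfolding Y_def by blast
qed

lemma tangent_pos:
  fixes eta :: "'a::euclidean_space \<Rightarrow> 'a \<Rightarrow> real"
  assumes L: "lorentz_form eta" and s: "eta s s = -1" and u: "eta u s = 0"
  shows "eta u u \<ge> 0 \<and> (eta u u = 0 \<longrightarrow> u = 0)"
proof -
  obtain a0 a1 a2 a3 where F: "\<And>v w. eta v w = - eta a0 v * eta a0 w + eta a1 v * eta a1 w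
          + eta a2 v * eta a2 w + eta a3 v * eta a3 w" using coords[OF L] by blast
  have h1: "- ((eta a0 s)^2) + (eta a1 s)^2 + (eta a2 s)^2 + (eta a3 s)^2 = -1"
    using s F[of s s] by (simp add: power2_eq_square)
  have h2: "- eta a0 u * eta a0 s + eta a1 u * eta a1 s + eta a2 u * eta a2 s + eta a3 u * eta a3 s = 0"
    using u F[of u s] by simp
  have uu: "eta u u = - ((eta a0 u)^2) + (eta a1 u)^2 + (eta a2 u)^2 + (eta a3 u)^2"
    using F[of u u] by (simp add: power2_eq_square)
  note A = alg_pos[OF h1 h2]
  show ?thesis
  proof
    show "eta u u \<ge> 0" using A uu by linarith
    show "eta u u = 0 \<longrightarrow> u = 0"
    proof
      assume "eta u u = 0"
      then have "eta a0 u = 0 \<and> eta a1 u = 0 \<and> eta a2 u = 0 \<and> eta a3 u = 0" using A uu by auto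
      then have "eta u w = 0" for w using F[of u w] by simp
      then show "u = 0" using lf_nd[OF L] by blast
    qed
  qed
qed


lemma alg1:
  fixes c a g h S N :: real
  assumes "c^2 - a^2 = 1" "h^2 = g^2 - 1"
  shows "((c*S + a*N) + ((g*c + h*a)*S + (g*a + h*c)*N))*c + (((g*c + h*a)*S + (g*a + h*c)*N) - (c*S + a*N) - 2*g*(c*S + a*N))*(g*c + h*a) = (1+g)*(-(g-1)*S + h*N)"
  using assms by algebra
lemma alg2:
  fixes c a g h S N :: real
  assumes "c^2 - a^2 = 1" "h^2 = g^2 - 1"
  shows "((c*S + a*N) + ((g*c + h*a)*S + (g*a + h*c)*N))*a + (((g*c + h*a)*S + (g*a + h*c)*N) - (c*S + a*N) - 2*g*(c*S + a*N))*(g*a + h*c) = (1+g)*((g-1)*N - h*S)"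
  using assms by algebra

definition Ff :: "('a::real_vector \<Rightarrow> 'a \<Rightarrow> real) \<Rightarrow> 'a \<Rightarrow> 'a \<Rightarrow> 'a \<Rightarrow> 'a" where
  "Ff eta s1 s2 = (\<lambda>w. w + (1 / (1 + (- eta s1 s2))) *\<^sub>R
            (tens eta s1 s1 w + tens eta s2 s2 w + wedge eta s1 s2 w
             - (2 * (- eta s1 s2)) *\<^sub>R tens eta s2 s1 w))"

lemma core:
  fixes eta :: "'a::euclidean_space \<Rightarrow> 'a \<Rightarrow> real"
  assumes L: "lorentz_form eta"
    and ss: "eta s s = -1" and s11: "eta s1 s1 = -1"
    and s_span: "s \<in> span {s1, s2}"
    and b: "b \<in> tangent eta s" and b_norm: "eta b b < 1"
    and b_boost: "boost eta s b s1 = s2"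
  shows "boost eta s b = Ff eta s1 s2"
proof -
  have Bl: "bilinear eta" using lf_bil[OF L] .
  have sym: "\<And>u v. eta u v = eta v u" using lf_sym[OF L] .
  note bil = bilinear_radd[OF Bl] bilinear_rmul[OF Bl] bilinear_rneg[OF Bl] bilinear_rsub[OF Bl]
     bilinear_ladd[OF Bl] bilinear_lmul[OF Bl] bilinear_lneg[OF Bl] bilinear_lsub[OF Bl]
     bilinear_lzero[OF Bl] bilinear_rzero[OF Bl]
  have bs: "eta b s = 0" using b unfolding tangent_def by simp
  show ?thesis
  proof (cases "b = 0")
    case True
    then have "s2 = s1" using b_boost unfolding boost_def by simp
    then show ?thesis
    proof (intro ext)
      fix w
      have "((eta s1 w / 2) *\<^sub>R s1 + (eta s1 w / 2) *\<^sub>R s1) = eta s1 w *\<^sub>R s1"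
        by (simp add: scaleR_add_left[symmetric])
      then show "boost eta s b w = Ff eta s1 s2 w"
        using True \<open>s2 = s1\<close> unfolding boost_def Ff_def tens_def wedge_def by (simp add: s11 scaleR_add_left[symmetric])
    qed
  next
    case False
    have bpos: "eta b b > 0" using tangent_pos[OF L ss bs] False by force
    define \<beta> where "\<beta> = sqrt (eta b b)"
    define n where "n = (1 / \<beta>) *\<^sub>R b"
    define g where "g = 1 / sqrt (1 - \<beta>\<^sup>2)"
    define h where "h = \<beta> * g"
    have b0: "\<beta> > 0" unfolding \<beta>_def using bpos by simp
    have b2: "\<beta>\<^sup>2 = eta b b" unfolding \<beta>_def using bpos by simp
    have b1: "\<beta>\<^sup>2 < 1" using b2 b_norm by simp
    have sq: "sqrt (1 - \<beta>\<^sup>2) > 0" "sqrt (1 - \<beta>\<^sup>2) < 1" "(sqrt (1 - \<beta>\<^sup>2))\<^sup>2 = 1 - \<beta>\<^sup>2"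
      using b1 b0 by (auto simp: real_sqrt_lt_1_iff)
    have g1: "g > 1" unfolding g_def using sq by simp
    have gg: "g\<^sup>2 * (1 - \<beta>\<^sup>2) = 1" unfolding g_def using sq by (simp add: power_divide)
    have hh: "h\<^sup>2 = g\<^sup>2 - 1" unfolding h_def using gg by (simp add: power_mult_distrib algebra_simps)
    have nn: "eta n n = 1" unfolding n_def using b0 b2 bpos by (simp add: bil power2_eq_square)
    have ns: "eta n s = 0" "eta s n = 0" unfolding n_def using bs sym by (simp_all add: bil)
    have Bf: "boost eta s b = (\<lambda>w. w + (g - 1) *\<^sub>R (- (eta s w *\<^sub>R s) + eta n w *\<^sub>R n)
             + h *\<^sub>R (eta n w *\<^sub>R s - eta s w *\<^sub>R n))"
      unfolding boost_def Let_def tens_def using False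
      by (simp add: \<beta>_def[symmetric] n_def[symmetric] g_def[symmetric] h_def)
    define c where "c = - eta s s1"
    define a where "a = eta n s1"
    have ess1: "eta s s1 = - c" unfolding c_def by simp
    define A where "A = (g-1)*c + h*a"
    define C where "C = (g-1)*a + h*c"
    have s2e: "s2 = s1 + A *\<^sub>R s + C *\<^sub>R n"
      using b_boost unfolding Bf c_def[symmetric] A_def C_def
      by (simp add: ess1 a_def[symmetric] algebra_simps)
    define r where "r = s1 - c *\<^sub>R s - a *\<^sub>R n"
    have rs: "eta r s = 0" "eta s r = 0" unfolding r_def c_def using ss ns sym by (simp_all add: bil)
    have rn: "eta r n = 0" "eta n r = 0" unfolding r_def a_def using nn ns sym by (simp_all add: bil)
    have rr: "eta r r \<ge> 0 \<and> (eta r r = 0 \<longrightarrow> r = 0)" using tangent_pos[OF L ss rs(1)] .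
    have r1: "eta r s1 = eta r r" by (subst (2) r_def) (simp add: bil rs rn)
    have r2: "eta r s2 = eta r r" unfolding s2e using r1 rs rn by (simp add: bil)
    have s1e: "s1 = c *\<^sub>R s + a *\<^sub>R n + r" unfolding r_def by simp
    have s11': "- (c^2) + a^2 + eta r r = -1"
      using s11 unfolding s1e using ss nn ns rs rn sym by (simp add: bil power2_eq_square)
    obtain x y where sxy: "s = x *\<^sub>R s1 + y *\<^sub>R s2"
    proof -
      from s_span obtain k where "s - k *\<^sub>R s1 \<in> span {s2}" unfolding span_insert by auto
      then obtain t where "s - k *\<^sub>R s1 = t *\<^sub>R s2" unfolding span_singleton by auto
      then show ?thesis using that[of k t] by (simp add: algebra_simps)
    qed
    have "eta r s = x * eta r s1 + y * eta r s2" unfolding sxy by (simp add: bil)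
    then have xy: "(x + y) * eta r r = 0" using rs r1 r2 by (simp add: algebra_simps)
    have r0: "r = 0"
    proof (rule ccontr)
      assume "r \<noteq> 0"
      then have "eta r r \<noteq> 0" using rr by blast
      then have "y = - x" using xy by simp
      then have sx: "s = (- x * A) *\<^sub>R s + (- x * C) *\<^sub>R n" using sxy unfolding s2e by (simp add: algebra_simps)
      have "eta s s = (- x * A) * eta s s + (- x * C) * eta s n" by (subst (2) sx) (simp add: bil)
      then have xA: "x * A = -1" using ss ns by simp
      have "eta n s = eta n ((- x * A) *\<^sub>R s + (- x * C) *\<^sub>R n)" by (simp only: sx[symmetric])
      also have "\<dots> = (- x * A) * eta n s + (- x * C) * eta n n" by (simp add: bil)
      finally
      have "x * C = 0" using nn ns by simp
      then have C0: "C = 0" using xA by auto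
      then have "(g-1)*a = - h * c" unfolding C_def by simp
      then have "((g-1)*a)^2 = (h*c)^2" by simp
      then have "(g-1)^2 * a^2 = (g^2 - 1) * c^2" using hh by (simp add: power_mult_distrib)
      then have "(g-1) * ((g-1) * a^2) = (g-1) * ((g+1) * c^2)"
        by (simp add: power2_eq_square algebra_simps)
      then have e: "(g-1) * a^2 = (g+1) * c^2" using g1 by simp
      have "a^2 \<le> c^2 - 1" using s11' rr by linarith
      then have "(g-1) * a^2 \<le> (g-1) * (c^2 - 1)" using g1 by (intro mult_left_mono) auto
      moreover have "(g-1)*c^2 \<le> (g+1)*c^2" by (intro mult_right_mono) auto
      moreover have "(g-1) * (c^2 - 1) = (g-1)*c^2 - (g-1)" by (simp add: algebra_simps)
      ultimately show False using e g1 by linarith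
    qed
    have s1f: "s1 = c *\<^sub>R s + a *\<^sub>R n" using s1e r0 by simp
    have ca: "c^2 - a^2 = 1" using s11' r0 by (simp add: bil)
    define c2 where "c2 = g*c + h*a"
    define a2 where "a2 = g*a + h*c"
    have s2f: "s2 = c2 *\<^sub>R s + a2 *\<^sub>R n" unfolding s2e s1f c2_def a2_def A_def C_def
      by (simp add: algebra_simps)
    have g12: "eta s1 s2 = - g" unfolding s1f s2f using ss nn ns
      by (simp add: bil c2_def a2_def) (use ca in algebra)
    show ?thesis
    proof
      fix w
      define SS where "SS = eta s w"
      define NN where "NN = eta n w"
      have X1: "eta s1 w = c*SS + a*NN" unfolding s1f SS_def NN_def by (simp add: bil)
      have X2: "eta s2 w = c2*SS + a2*NN" unfolding s2f SS_def NN_def by (simp add: bil)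
      define X1v where "X1v = c*SS + a*NN"
      define X2v where "X2v = c2*SS + a2*NN"
      have "Ff eta s1 s2 w = w + (1/(1+g)) *\<^sub>R (X1v *\<^sub>R s1 + X2v *\<^sub>R s2 + (X2v *\<^sub>R s1 - X1v *\<^sub>R s2) - (2*g) *\<^sub>R X1v *\<^sub>R s2)"
        unfolding Ff_def tens_def wedge_def g12 using X1 X2 X1v_def X2v_def by simp
      also have "\<dots> = w + ((1/(1+g)) * ((X1v + X2v)*c + (X2v - X1v - 2*g*X1v)*c2)) *\<^sub>R s
           + ((1/(1+g)) * ((X1v + X2v)*a + (X2v - X1v - 2*g*X1v)*a2)) *\<^sub>R n"
        unfolding s1f s2f by (simp add: algebra_simps)
      also have "\<dots> = w + (-(g-1)*SS + h*NN) *\<^sub>R s + ((g-1)*NN - h*SS) *\<^sub>R n"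
      proof -
        have "(X1v + X2v)*c + (X2v - X1v - 2*g*X1v)*c2 = (1+g)*(-(g-1)*SS + h*NN)"
          unfolding X1v_def X2v_def c2_def a2_def using alg1[OF ca hh] by simp
        moreover have "(X1v + X2v)*a + (X2v - X1v - 2*g*X1v)*a2 = (1+g)*((g-1)*NN - h*SS)"
          unfolding X1v_def X2v_def c2_def a2_def using alg2[OF ca hh] by simp
        ultimately show ?thesis using g1 by simp
      qed
      also have "\<dots> = boost eta s b w" unfolding Bf SS_def NN_def by (simp add: algebra_simps)
      finally show "boost eta s b w = Ff eta s1 s2 w" by simp
    qed
  qed
qed


theorem mainTheorem4:
  fixes eta :: "'a::euclidean_space \<Rightarrow> 'a \<Rightarrow> real"
    and S :: "'a set"
    and s0 s1 s2 s s' b b' :: 'a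
  assumes eta: "lorentz_form eta"
    and s0: "s0 \<in> hyperboloid eta"
    and S_def: "S = connected_component_set (hyperboloid eta) s0"
    and s1: "s1 \<in> S" and s2: "s2 \<in> S"
    and s: "s \<in> S" and s_span: "s \<in> span {s1, s2}"
    and s': "s' \<in> S" and s'_span: "s' \<in> span {s1, s2}"
    and b: "b \<in> tangent eta s" and b_norm: "eta b b < 1"
    and b_boost: "boost eta s b s1 = s2"
    and b': "b' \<in> tangent eta s'" and b'_norm: "eta b' b' < 1"
    and b'_boost: "boost eta s' b' s1 = s2"
  shows "boost eta s b = boost eta s' b'
     \<and> boost eta s' b' =
         (\<lambda>w. w + (1 / (1 + (- eta s1 s2))) *\<^sub>R
            (tens eta s1 s1 w + tens eta s2 s2 w + wedge eta s1 s2 w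
             - (2 * (- eta s1 s2)) *\<^sub>R tens eta s2 s1 w))"
  proof -
  have sub: "S \<subseteq> hyperboloid eta" unfolding S_def by (rule connected_component_subset)
  have e: "eta s s = -1" "eta s' s' = -1" "eta s1 s1 = -1"
    using sub s s' s1 unfolding hyperboloid_def by auto
  have 1: "boost eta s b = Ff eta s1 s2" by (rule core[OF eta e(1) e(3) s_span b b_norm b_boost])
  have 2: "boost eta s' b' = Ff eta s1 s2" by (rule core[OF eta e(2) e(3) s'_span b' b'_norm b'_boost])
  show ?thesis using 1 2 unfolding Ff_def by simp
qed

end
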